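(* Let $\{B_n(\mathbf{t})\}_{n\in\mathbb{N}}$ be a solution of the Volterra lattice hierarchy $$\partial_{t_{2k}}B_n=B_n\big(V^{(2k)}_{n+1}-V^{(2k)}_{n-1}\big),$$ with $V^{(2)}_n=B_n$, $V^{(4)}_n=V^{(2)}_n\big(V^{(2)}_{n-1}+V^{(2)}_n+V^{(2)}_{n+1}\big)$, $V^{(6)}_n=V^{(2)}_n\big(V^{(2)}_{n-1}V^{(2)}_{n+1}+V^{(4)}_{n-1}+V^{(4)}_n+V^{(4)}_{n+1}\big)$. For a given $n\in\mathbb{N}$ let $\phi(\mathbf{t})=B_n(\mathbf{t})$ and write $x=t_2$, $y=t_4$, $t=t_6$. Then $\phi$ satisfies the modified Kadomtsev–Petviashvili equation $$4\phi_t=6\phi_x\big(\xi-\phi^2\big)+\phi_{xxx}+3\xi_y,\qquad \phi_y=\xi_x,$$ for a function $\xi$ (namely $\xi=\partial_y\partial_x^{-1}\phi$).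
   Context: $\mathbf{t}=(t_2,t_4,t_6,\dots)$ are the even coupling constants; subscripts denote partial derivatives; $\partial_x^{-1}$ denotes an $x$-antiderivative. *)

theory Defs
  imports "HOL-Analysis.Analysis"
begin

text \<open>A lattice field: B n x y t, with lattice index n (integers) and times
  x = t2, y = t4, t = t6.\<close>
type_synonym lattice_field = "int \<Rightarrow> real \<Rightarrow> real \<Rightarrow> real \<Rightarrow> real"

definition V2 :: "lattice_field \<Rightarrow> lattice_field" where
  "V2 B n x y t = B n x y t"

definition V4 :: "lattice_field \<Rightarrow> lattice_field" where
  "V4 B n x y t = V2 B n x y t *
     (V2 B (n - 1) x y t + V2 B n x y t + V2 B (n + 1) x y t)"

definition V6 :: "lattice_field \<Rightarrow> lattice_field" where
  "V6 B n x y t = V2 B n x y t *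
     (V2 B (n - 1) x y t * V2 B (n + 1) x y t
      + V4 B (n - 1) x y t + V4 B n x y t + V4 B (n + 1) x y t)"

definition volterra_hierarchy :: "lattice_field \<Rightarrow> bool" where
  "volterra_hierarchy B \<longleftrightarrow> (\<forall>n x y t.
     ((\<lambda>x'. B n x' y t) has_real_derivative
        B n x y t * (V2 B (n + 1) x y t - V2 B (n - 1) x y t)) (at x) \<and>
     ((\<lambda>y'. B n x y' t) has_real_derivative
        B n x y t * (V4 B (n + 1) x y t - V4 B (n - 1) x y t)) (at y) \<and>
     ((\<lambda>t'. B n x y t') has_real_derivative
        B n x y t * (V6 B (n + 1) x y t - V6 B (n - 1) x y t)) (at t))"

end

theory Submission
  imports Defs
begin

lemma idx:
  fixes n :: int
  shows "n + 1 + 1 = n + 2" "n + 1 - 1 = n" "n - 1 + 1 = n" "n - 1 - 1 = n - 2"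
    "n + 2 + 1 = n + 3" "n + 2 - 1 = n + 1" "n - 2 + 1 = n - 1" "n - 2 - 1 = n - 3"
    "n + 3 - 1 = n + 2" "n - 3 + 1 = n - 2"
  by simp_all

lemma hx:
  assumes "volterra_hierarchy B"
  shows "((\<lambda>x'. B m x' y t) has_real_derivative
        B m x y t * (B (m + 1) x y t - B (m - 1) x y t)) (at x)"
  using assms unfolding volterra_hierarchy_def V2_def by blast

lemma hy:
  assumes "volterra_hierarchy B"
  shows "((\<lambda>y'. B m x y' t) has_real_derivative
        B m x y t * (B (m + 1) x y t * (B m x y t + B (m + 1) x y t + B (m + 1 + 1) x y t)
         - B (m - 1) x y t * (B (m - 1 - 1) x y t + B (m - 1) x y t + B m x y t))) (at y)"
  using assms unfolding volterra_hierarchy_def V4_def V2_def by simp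

lemma ht:
  assumes "volterra_hierarchy B"
  shows "((\<lambda>t'. B m x y t') has_real_derivative
        B m x y t * (V6 B (m + 1) x y t - V6 B (m - 1) x y t)) (at t)"
  using assms unfolding volterra_hierarchy_def by blast

definition dX :: "lattice_field \<Rightarrow> int \<Rightarrow> real \<Rightarrow> real \<Rightarrow> real \<Rightarrow> real" where
  "dX B m x y t = B m x y t * (B (m + 1) x y t - B (m - 1) x y t)"

definition dXX :: "lattice_field \<Rightarrow> int \<Rightarrow> real \<Rightarrow> real \<Rightarrow> real \<Rightarrow> real" where
  "dXX B m x y t = dX B m x y t * (B (m + 1) x y t - B (m - 1) x y t)
     + B m x y t * (dX B (m + 1) x y t - dX B (m - 1) x y t)"

lemma hdX:
  assumes "volterra_hierarchy B"
  shows "((\<lambda>x'. dX B m x' y t) has_real_derivative dXX B m x y t) (at x)"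
  unfolding dX_def dXX_def
  by (rule derivative_eq_intros hx[OF assms] refl)+ (simp add: algebra_simps)

lemma hdXX:
  assumes "volterra_hierarchy B"
  shows "((\<lambda>x'. dXX B m x' y t) has_real_derivative
      dXX B m x y t * (B (m + 1) x y t - B (m - 1) x y t)
      + dX B m x y t * (dX B (m + 1) x y t - dX B (m - 1) x y t)
      + dX B m x y t * (dX B (m + 1) x y t - dX B (m - 1) x y t)
      + B m x y t * (dXX B (m + 1) x y t - dXX B (m - 1) x y t)) (at x)"
  unfolding dXX_def[of B m]
  apply (rule derivative_eq_intros hx[OF assms] hdX[OF assms] refl)+
  apply (simp add: dXX_def dX_def algebra_simps)
  done

theorem theorem2p4:
  fixes B :: lattice_field and n :: int
  assumes "volterra_hierarchy B"
  shows "\<exists>\<xi> :: real \<Rightarrow> real \<Rightarrow> real \<Rightarrow> real. \<forall>x y t.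
     ((\<lambda>x'. \<xi> x' y t) has_real_derivative deriv (\<lambda>y'. B n x y' t) y) (at x) \<and>
     (\<lambda>y'. \<xi> x y' t) differentiable (at y) \<and>
     4 * deriv (\<lambda>t'. B n x y t') t =
       6 * deriv (\<lambda>x'. B n x' y t) x * (\<xi> x y t - (B n x y t)\<^sup>2)
       + deriv (\<lambda>x1. deriv (\<lambda>x2. deriv (\<lambda>x3. B n x3 y t) x2) x1) x
       + 3 * deriv (\<lambda>y'. \<xi> x y' t) y"
proof (intro exI[of _ "\<lambda>x y t. V4 B n x y t"] allI)
  fix x y t
  note H = assms
  have dy: "deriv (\<lambda>y'. B n x y' t) y =
        B n x y t * (B (n + 1) x y t * (B n x y t + B (n + 1) x y t + B (n + 1 + 1) x y t)
         - B (n - 1) x y t * (B (n - 1 - 1) x y t + B (n - 1) x y t + B n x y t))"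
    by (rule DERIV_imp_deriv[OF hy[OF H]])
  have g1: "((\<lambda>x'. V4 B n x' y t) has_real_derivative deriv (\<lambda>y'. B n x y' t) y) (at x)"
    unfolding dy V4_def V2_def
    by (rule derivative_eq_intros hx[OF H] refl)+ (simp only: idx, simp add: algebra_simps)
  define XY where "XY = (\<lambda>m. B m x y t * (B (m + 1) x y t * (B m x y t + B (m + 1) x y t + B (m + 1 + 1) x y t)
         - B (m - 1) x y t * (B (m - 1 - 1) x y t + B (m - 1) x y t + B m x y t)))"
  have hxiy: "((\<lambda>y'. V4 B n x y' t) has_real_derivative
      XY n * (B (n - 1) x y t + B n x y t + B (n + 1) x y t)
      + B n x y t * (XY (n - 1) + XY n + XY (n + 1))) (at y)"
    unfolding V4_def V2_def XY_def
    by (rule derivative_eq_intros hy[OF H] refl)+ (simp add: algebra_simps)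
  have g2: "(\<lambda>y'. V4 B n x y' t) differentiable (at y)"
    using hxiy real_differentiable_def by blast
  have d1: "deriv (\<lambda>x3. B n x3 y t) x2 = dX B n x2 y t" for x2
    unfolding dX_def by (rule DERIV_imp_deriv[OF hx[OF H]])
  have d2: "deriv (\<lambda>x2. dX B n x2 y t) x1 = dXX B n x1 y t" for x1
    by (rule DERIV_imp_deriv[OF hdX[OF H]])
  have d3: "deriv (\<lambda>x1. deriv (\<lambda>x2. deriv (\<lambda>x3. B n x3 y t) x2) x1) x =
      dXX B n x y t * (B (n + 1) x y t - B (n - 1) x y t)
      + dX B n x y t * (dX B (n + 1) x y t - dX B (n - 1) x y t)
      + dX B n x y t * (dX B (n + 1) x y t - dX B (n - 1) x y t)
      + B n x y t * (dXX B (n + 1) x y t - dXX B (n - 1) x y t)"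
    unfolding d1 d2 by (rule DERIV_imp_deriv[OF hdXX[OF H]])
  have dt: "deriv (\<lambda>t'. B n x y t') t = B n x y t * (V6 B (n + 1) x y t - V6 B (n - 1) x y t)"
    by (rule DERIV_imp_deriv[OF ht[OF H]])
  have dxx: "deriv (\<lambda>x'. B n x' y t) x = dX B n x y t"
    by (rule d1)
  have dxiy: "deriv (\<lambda>y'. V4 B n x y' t) y = XY n * (B (n - 1) x y t + B n x y t + B (n + 1) x y t)
      + B n x y t * (XY (n - 1) + XY n + XY (n + 1))"
    by (rule DERIV_imp_deriv[OF hxiy])
  have g3: "4 * deriv (\<lambda>t'. B n x y t') t =
       6 * deriv (\<lambda>x'. B n x' y t) x * (V4 B n x y t - (B n x y t)\<^sup>2)
       + deriv (\<lambda>x1. deriv (\<lambda>x2. deriv (\<lambda>x3. B n x3 y t) x2) x1) x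
       + 3 * deriv (\<lambda>y'. V4 B n x y' t) y"
    unfolding dt dxx d3 dxiy
    unfolding V6_def V4_def V2_def dXX_def dX_def XY_def
    apply (simp only: idx)
    by algebra
  show "((\<lambda>x'. V4 B n x' y t) has_real_derivative deriv (\<lambda>y'. B n x y' t) y) (at x) \<and>
     (\<lambda>y'. V4 B n x y' t) differentiable (at y) \<and> 4 * deriv (\<lambda>t'. B n x y t') t =
       6 * deriv (\<lambda>x'. B n x' y t) x * (V4 B n x y t - (B n x y t)\<^sup>2)
       + deriv (\<lambda>x1. deriv (\<lambda>x2. deriv (\<lambda>x3. B n x3 y t) x2) x1) x
       + 3 * deriv (\<lambda>y'. V4 B n x y' t) y"
    using g1 g2 g3 by blast
qed

end
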